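(* Let $\mathcal{S}$ be the set of non-uniformly stable matchings in $G$, let $\equiv$ be the relation on $\mathcal{S}$ with $\mu\equiv\sigma$ iff $\mu(v)\sim_v\sigma(v)$ for every $v\in V_1$, let $\mathbb{C}$ be the set of its equivalence classes and $\langle\mu\rangle$ the class of $\mu$. Then the operations $\langle\mu\rangle\wedge_\equiv\langle\sigma\rangle:=\langle\mu\wedge\sigma\rangle$ and $\langle\mu\rangle\vee_\equiv\langle\sigma\rangle:=\langle\mu\vee\sigma\rangle$ are well-defined on $\mathbb{C}$, and $(\mathbb{C},\wedge_\equiv,\vee_\equiv)$ is a distributive lattice (i.e., both operations are idempotent, commutative and associative, satisfy the absorption laws, and each distributes over the other).
   Context: Setting: $G=(V,E)$ is a finite simple bipartite graph with $V=V_1\sqcup V_2$, every edge joining a vertex of $V_1$ to a vertex of $V_2$; an edge is identified with the set of its two endpoints. $E$ is partitioned into $E_1,E_2$. For $F\subseteq E$ and $v\in V$, $F(v)$ is the set of edges of $F$ incident to $v$. For every $v\in V$ there is a transitive and complete binary relation $\succsim_v$ on $E(v)\cup\{\emptyset\}$ with $e\succsim_v\emptyset$ and $\emptyset\not\succsim_v e$ for all $e\in E(v)$; $e\succ_v f$ means $e\succsim_v f$ and $f\not\succsim_v e$; $e\sim_v f$ means both $e\succsim_v f$ and $f\succsim_v e$. A matching is $\mu\subseteq E$ with $|\mu(v)|\le1$ for all $v$; $\mu(v)$ denotes the edge of $\mu$ at $v$, or $\emptyset$. An edge $e\in E\setminus\mu$ weakly blocks $\mu$ if $e\succsim_v\mu(v)$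 for every $v\in e$; it strongly blocks $\mu$ if additionally $e\succ_w\mu(w)$ for some $w\in e$. $\mu$ is non-uniformly stable if no edge of $E_1\setminus\mu$ weakly blocks $\mu$ and no edge of $E_2\setminus\mu$ strongly blocks $\mu$. For non-uniformly stable $\mu,\sigma$, define for each $v\in V_1$: $(\mu\wedge\sigma)(v)=\mu(v)$ if $\mu(v)\succsim_v\sigma(v)$ and $=\sigma(v)$ if $\sigma(v)\succ_v\mu(v)$; $(\mu\vee\sigma)(v)=\mu(v)$ if $\sigma(v)\succsim_v\mu(v)$ and $=\sigma(v)$ if $\mu(v)\succ_v\sigma(v)$; $\mu\wedge\sigma$ and $\mu\vee\sigma$ are the corresponding edge sets $\{(\mu\odot\sigma)(v):v\in V_1\}\setminus\{\emptyset\}$, which are non-uniformly stable matchings. *)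

theory Defs
  imports Main
begin

text \<open>Edges are two-element vertex sets; the empty set {} plays the role of the
  symbol "no edge". A preference profile P assigns to each vertex v a relation
  P v on edges (P v e f meaning "e is weakly preferred to f at v").\<close>

definition inc_edges :: "'a set set \<Rightarrow> 'a \<Rightarrow> 'a set set" where
  "inc_edges F v = {e \<in> F. v \<in> e}"

definition setting ::
  "'a set \<Rightarrow> 'a set \<Rightarrow> 'a set set \<Rightarrow> 'a set set \<Rightarrow> 'a set set
   \<Rightarrow> ('a \<Rightarrow> 'a set \<Rightarrow> 'a set \<Rightarrow> bool) \<Rightarrow> bool" where
  "setting V1 V2 E E1 E2 P \<longleftrightarrow>
     finite V1 \<and> finite V2 \<and> V1 \<inter> V2 = {} \<and>
     E \<subseteq> {{a, b} | a b. a \<in> V1 \<and> b \<in> V2} \<and>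
     E1 \<union> E2 = E \<and> E1 \<inter> E2 = {} \<and>
     (\<forall>v \<in> V1 \<union> V2.
        (\<forall>e \<in> inc_edges E v \<union> {{}}. \<forall>f \<in> inc_edges E v \<union> {{}}.
            P v e f \<or> P v f e) \<and>
        (\<forall>e \<in> inc_edges E v \<union> {{}}. \<forall>f \<in> inc_edges E v \<union> {{}}.
           \<forall>g \<in> inc_edges E v \<union> {{}}. P v e f \<longrightarrow> P v f g \<longrightarrow> P v e g) \<and>
        (\<forall>e \<in> inc_edges E v. P v e {} \<and> \<not> P v {} e))"

definition strict_pref :: "('a \<Rightarrow> 'a set \<Rightarrow> 'a set \<Rightarrow> bool) \<Rightarrow> 'a \<Rightarrow> 'a set \<Rightarrow> 'a set \<Rightarrow> bool" where
  "strict_pref P v e f \<longleftrightarrow> P v e f \<and> \<not> P v f e"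

definition indiff :: "('a \<Rightarrow> 'a set \<Rightarrow> 'a set \<Rightarrow> bool) \<Rightarrow> 'a \<Rightarrow> 'a set \<Rightarrow> 'a set \<Rightarrow> bool" where
  "indiff P v e f \<longleftrightarrow> P v e f \<and> P v f e"

definition is_matching :: "'a set set \<Rightarrow> 'a set set \<Rightarrow> bool" where
  "is_matching E \<mu> \<longleftrightarrow> \<mu> \<subseteq> E \<and> (\<forall>v. card (inc_edges \<mu> v) \<le> 1)"

definition medge :: "'a set set \<Rightarrow> 'a \<Rightarrow> 'a set" where
  "medge \<mu> v = (if \<exists>e \<in> \<mu>. v \<in> e then (THE e. e \<in> \<mu> \<and> v \<in> e) else {})"

definition weakly_blocks :: "('a \<Rightarrow> 'a set \<Rightarrow> 'a set \<Rightarrow> bool) \<Rightarrow> 'a set set \<Rightarrow> 'a set \<Rightarrow> bool" where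
  "weakly_blocks P \<mu> e \<longleftrightarrow> e \<notin> \<mu> \<and> (\<forall>v \<in> e. P v e (medge \<mu> v))"

definition strongly_blocks :: "('a \<Rightarrow> 'a set \<Rightarrow> 'a set \<Rightarrow> bool) \<Rightarrow> 'a set set \<Rightarrow> 'a set \<Rightarrow> bool" where
  "strongly_blocks P \<mu> e \<longleftrightarrow> weakly_blocks P \<mu> e \<and> (\<exists>w \<in> e. strict_pref P w e (medge \<mu> w))"

definition nu_stable ::
  "'a set set \<Rightarrow> 'a set set \<Rightarrow> 'a set set \<Rightarrow> ('a \<Rightarrow> 'a set \<Rightarrow> 'a set \<Rightarrow> bool)
   \<Rightarrow> 'a set set \<Rightarrow> bool" where
  "nu_stable E E1 E2 P \<mu> \<longleftrightarrow> is_matching E \<mu> \<and>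
     (\<forall>e \<in> E1 - \<mu>. \<not> weakly_blocks P \<mu> e) \<and>
     (\<forall>e \<in> E2 - \<mu>. \<not> strongly_blocks P \<mu> e)"

definition NUS :: "'a set set \<Rightarrow> 'a set set \<Rightarrow> 'a set set \<Rightarrow> ('a \<Rightarrow> 'a set \<Rightarrow> 'a set \<Rightarrow> bool)
   \<Rightarrow> 'a set set set" where
  "NUS E E1 E2 P = {\<mu>. nu_stable E E1 E2 P \<mu>}"

definition meet :: "'a set \<Rightarrow> ('a \<Rightarrow> 'a set \<Rightarrow> 'a set \<Rightarrow> bool) \<Rightarrow> 'a set set \<Rightarrow> 'a set set \<Rightarrow> 'a set set" where
  "meet V1 P \<mu> \<sigma> =
     (\<lambda>v. if P v (medge \<mu> v) (medge \<sigma> v) then medge \<mu> v else medge \<sigma> v) ` V1 - {{}}"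

definition join :: "'a set \<Rightarrow> ('a \<Rightarrow> 'a set \<Rightarrow> 'a set \<Rightarrow> bool) \<Rightarrow> 'a set set \<Rightarrow> 'a set set \<Rightarrow> 'a set set" where
  "join V1 P \<mu> \<sigma> =
     (\<lambda>v. if P v (medge \<sigma> v) (medge \<mu> v) then medge \<mu> v else medge \<sigma> v) ` V1 - {{}}"

definition equivR :: "'a set \<Rightarrow> 'a set set \<Rightarrow> 'a set set \<Rightarrow> 'a set set \<Rightarrow>
   ('a \<Rightarrow> 'a set \<Rightarrow> 'a set \<Rightarrow> bool) \<Rightarrow> ('a set set \<times> 'a set set) set" where
  "equivR V1 E E1 E2 P = {(\<mu>, \<sigma>). \<mu> \<in> NUS E E1 E2 P \<and> \<sigma> \<in> NUS E E1 E2 P \<and>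
      (\<forall>v \<in> V1. indiff P v (medge \<mu> v) (medge \<sigma> v))}"

text \<open>The set C of equivalence classes, and the class operations (defined via
  representatives; well-definedness is part of the theorem).\<close>
definition classes :: "'a set \<Rightarrow> 'a set set \<Rightarrow> 'a set set \<Rightarrow> 'a set set \<Rightarrow>
   ('a \<Rightarrow> 'a set \<Rightarrow> 'a set \<Rightarrow> bool) \<Rightarrow> 'a set set set set" where
  "classes V1 E E1 E2 P = NUS E E1 E2 P // equivR V1 E E1 E2 P"

definition meetC :: "'a set \<Rightarrow> 'a set set \<Rightarrow> 'a set set \<Rightarrow> 'a set set \<Rightarrow>
   ('a \<Rightarrow> 'a set \<Rightarrow> 'a set \<Rightarrow> bool) \<Rightarrow> 'a set set set \<Rightarrow> 'a set set set \<Rightarrow> 'a set set set" where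
  "meetC V1 E E1 E2 P X Y =
     equivR V1 E E1 E2 P `` {meet V1 P (SOME \<mu>. \<mu> \<in> X) (SOME \<sigma>. \<sigma> \<in> Y)}"

definition joinC :: "'a set \<Rightarrow> 'a set set \<Rightarrow> 'a set set \<Rightarrow> 'a set set \<Rightarrow>
   ('a \<Rightarrow> 'a set \<Rightarrow> 'a set \<Rightarrow> bool) \<Rightarrow> 'a set set set \<Rightarrow> 'a set set set \<Rightarrow> 'a set set set" where
  "joinC V1 E E1 E2 P X Y =
     equivR V1 E E1 E2 P `` {join V1 P (SOME \<mu>. \<mu> \<in> X) (SOME \<sigma>. \<sigma> \<in> Y)}"

end

theory Submission
  imports Defs
begin


lemma setting_swap: "setting A B E E1 E2 P \<Longrightarrow> setting B A E E1 E2 P"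
proof -
  assume a: "setting A B E E1 E2 P"
  have "E \<subseteq> {{a, b} | a b. a \<in> B \<and> b \<in> A}"
  proof
    fix e assume "e \<in> E"
    then obtain a b where "e = {a,b}" "a \<in> A" "b \<in> B" using a unfolding setting_def by blast
    hence "e = {b,a} \<and> b \<in> B \<and> a \<in> A" by (simp add: insert_commute)
    thus "e \<in> {{a, b} | a b. a \<in> B \<and> b \<in> A}" by blast
  qed
  with a show ?thesis unfolding setting_def Un_commute[of B A] Int_commute[of B A]
    by (elim conjE) (intro conjI; assumption)
qed

locale ST =
  fixes A B :: "'a set" and E E1 E2 :: "'a set set" and P :: "'a \<Rightarrow> 'a set \<Rightarrow> 'a set \<Rightarrow> bool"
  assumes st: "setting A B E E1 E2 P"
begin

abbreviation "D v \<equiv> inc_edges E v \<union> {{}}"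
abbreviation "S \<equiv> NUS E E1 E2 P"

lemma finA: "finite A" and finB: "finite B" and disj: "A \<inter> B = {}"
  and Esub: "E \<subseteq> {{a, b} | a b. a \<in> A \<and> b \<in> B}" and E12: "E1 \<union> E2 = E"
  using st unfolding setting_def by auto

lemma pref: "v \<in> A \<union> B \<Longrightarrow>
        (\<forall>e \<in> D v. \<forall>f \<in> D v. P v e f \<or> P v f e) \<and>
        (\<forall>e \<in> D v. \<forall>f \<in> D v. \<forall>g \<in> D v. P v e f \<longrightarrow> P v f g \<longrightarrow> P v e g) \<and>
        (\<forall>e \<in> inc_edges E v. P v e {} \<and> \<not> P v {} e)"
  using st unfolding setting_def by blast

lemma tot: "v \<in> A \<union> B \<Longrightarrow> x \<in> D v \<Longrightarrow> y \<in> D v \<Longrightarrow> P v x y \<or> P v y x"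
  using pref by blast
lemma refl: "v \<in> A \<union> B \<Longrightarrow> x \<in> D v \<Longrightarrow> P v x x"
  using tot by blast
lemma trans: "v \<in> A \<union> B \<Longrightarrow> x \<in> D v \<Longrightarrow> y \<in> D v \<Longrightarrow> z \<in> D v \<Longrightarrow> P v x y \<Longrightarrow> P v y z \<Longrightarrow> P v x z"
  using pref by blast
lemma bot: "v \<in> A \<union> B \<Longrightarrow> e \<in> inc_edges E v \<Longrightarrow> P v e {} \<and> \<not> P v {} e"
  using pref by blast

lemma finE: "finite E"
proof -
  have "E \<subseteq> (\<lambda>(a,b). {a,b}) ` (A \<times> B)" using Esub by auto
  thus ?thesis using finA finB finite_subset by blast
qed

lemma E_form: "e \<in> E \<Longrightarrow> \<exists>a b. e = {a, b} \<and> a \<in> A \<and> b \<in> B"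
  using Esub by blast

lemma E_ne: "e \<in> E \<Longrightarrow> e \<noteq> {}" using E_form by blast

lemma E_vert: "e \<in> E \<Longrightarrow> v \<in> e \<Longrightarrow> v \<in> A \<union> B" using E_form by blast

lemma E_two: "e \<in> E \<Longrightarrow> v \<in> e \<Longrightarrow> w \<in> e \<Longrightarrow> v \<noteq> w \<Longrightarrow> u \<in> e \<Longrightarrow> u = v \<or> u = w"
  using E_form by blast

lemma E_AA: "e \<in> E \<Longrightarrow> a \<in> e \<Longrightarrow> a' \<in> e \<Longrightarrow> a \<in> A \<Longrightarrow> a' \<in> A \<Longrightarrow> a = a'"
  using E_form disj by blast
lemma E_BB: "e \<in> E \<Longrightarrow> a \<in> e \<Longrightarrow> a' \<in> e \<Longrightarrow> a \<in> B \<Longrightarrow> a' \<in> B \<Longrightarrow> a = a'"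
  using E_form disj by blast
lemma E_hasB: "e \<in> E \<Longrightarrow> \<exists>b\<in>B. b \<in> e" using E_form by blast
lemma E_hasA: "e \<in> E \<Longrightarrow> \<exists>a\<in>A. a \<in> e" using E_form by blast
lemma E_AB: "e \<in> E \<Longrightarrow> a \<in> e \<Longrightarrow> b \<in> e \<Longrightarrow> a \<in> A \<Longrightarrow> b \<in> B \<Longrightarrow> a \<noteq> b"
  using disj by blast

lemma D_fin: "finite (D v)"
  using finE unfolding inc_edges_def by auto

lemma m_sub: "is_matching E \<mu> \<Longrightarrow> \<mu> \<subseteq> E" unfolding is_matching_def by simp

lemma m_uniq: assumes "is_matching E \<mu>" "e \<in> \<mu>" "f \<in> \<mu>" "v \<in> e" "v \<in> f" shows "e = f"
proof -
  have fin: "finite (inc_edges \<mu> v)"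
    using m_sub[OF assms(1)] finE unfolding inc_edges_def by (auto intro: finite_subset)
  have "card (inc_edges \<mu> v) \<le> Suc 0" using assms(1) unfolding is_matching_def by simp
  with fin have "\<forall>x\<in>inc_edges \<mu> v. \<forall>y\<in>inc_edges \<mu> v. x = y" using card_le_Suc0_iff_eq by blast
  thus ?thesis using assms unfolding inc_edges_def by blast
qed

lemma m_intro: assumes "L \<subseteq> E" "\<And>e f v. e \<in> L \<Longrightarrow> f \<in> L \<Longrightarrow> v \<in> e \<Longrightarrow> v \<in> f \<Longrightarrow> e = f"
  shows "is_matching E L"
  unfolding is_matching_def
proof (intro conjI allI)
  show "L \<subseteq> E" by fact
  fix v
  have fin: "finite (inc_edges L v)"
    using assms(1) finE unfolding inc_edges_def by (auto intro: finite_subset)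
  have "\<forall>x\<in>inc_edges L v. \<forall>y\<in>inc_edges L v. x = y" using assms(2) unfolding inc_edges_def by blast
  thus "card (inc_edges L v) \<le> 1" using card_le_Suc0_iff_eq[OF fin] by simp
qed

lemma medge_eq: assumes "is_matching E \<mu>" "e \<in> \<mu>" "v \<in> e" shows "medge \<mu> v = e"
proof -
  have "(THE e. e \<in> \<mu> \<and> v \<in> e) = e"
    by (rule the_equality) (use assms m_uniq in blast)+
  thus ?thesis using assms unfolding medge_def by auto
qed

lemma medge_cases: assumes "is_matching E \<mu>" shows "medge \<mu> v = {} \<or> (medge \<mu> v \<in> \<mu> \<and> v \<in> medge \<mu> v)"
proof (cases "\<exists>e\<in>\<mu>. v \<in> e")
  case True
  then obtain e where "e \<in> \<mu>" "v \<in> e" by blast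
  thus ?thesis using medge_eq[OF assms] by simp
next
  case False thus ?thesis unfolding medge_def by simp
qed

lemma medge_ne: "is_matching E \<mu> \<Longrightarrow> medge \<mu> v \<noteq> {} \<Longrightarrow> medge \<mu> v \<in> \<mu> \<and> v \<in> medge \<mu> v"
  using medge_cases by blast

lemma medge_empty: "is_matching E \<mu> \<Longrightarrow> medge \<mu> v = {} \<longleftrightarrow> (\<forall>e\<in>\<mu>. v \<notin> e)"
proof
  assume m: "is_matching E \<mu>" and "medge \<mu> v = {}"
  thus "\<forall>e\<in>\<mu>. v \<notin> e" using medge_eq[OF m] m_sub[OF m] E_ne by blast
next
  assume "is_matching E \<mu>" "\<forall>e\<in>\<mu>. v \<notin> e"
  thus "medge \<mu> v = {}" unfolding medge_def by auto
qed

lemma medge_D: "is_matching E \<mu> \<Longrightarrow> medge \<mu> v \<in> D v"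
  using medge_cases[of \<mu> v] m_sub[of \<mu>] unfolding inc_edges_def by blast

lemma S_m: "\<mu> \<in> S \<Longrightarrow> is_matching E \<mu>" unfolding NUS_def nu_stable_def by simp

lemma S_D: "\<mu> \<in> S \<Longrightarrow> medge \<mu> v \<in> D v" using medge_D S_m by blast

lemma strict_ne: "v \<in> A \<union> B \<Longrightarrow> x \<in> D v \<Longrightarrow> y \<in> D v \<Longrightarrow> strict_pref P v x y \<Longrightarrow> x \<noteq> {}"
  unfolding strict_pref_def using refl bot by (metis Un_iff singletonD)

lemma G: assumes X: "X \<in> S" and Y: "Y \<in> S" and e: "e \<in> X" "e \<notin> Y" and vw: "v \<in> e" "w \<in> e" "v \<noteq> w"
  and pv: "P v e (medge Y v)"
  shows "P w (medge Y w) e \<and> (strict_pref P v e (medge Y v) \<longrightarrow> strict_pref P w (medge Y w) e)"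
proof -
  have eE: "e \<in> E" using e X S_m m_sub by blast
  have wAB: "w \<in> A \<union> B" using E_vert eE vw by blast
  have eD: "e \<in> D w" using eE vw unfolding inc_edges_def by blast
  have YD: "medge Y w \<in> D w" using S_D Y by blast
  have all: "\<forall>u\<in>e. u = v \<or> u = w" using E_two eE vw by blast
  have ns: "(\<forall>f \<in> E1 - Y. \<not> weakly_blocks P Y f) \<and> (\<forall>f \<in> E2 - Y. \<not> strongly_blocks P Y f)"
    using Y unfolding NUS_def nu_stable_def by simp
  have nb: False if "P w e (medge Y w)" "strict_pref P v e (medge Y v) \<or> strict_pref P w e (medge Y w)"
  proof -
    have "\<forall>u\<in>e. P u e (medge Y u)"
    proof
      fix u assume "u \<in> e"
      hence "u = v \<or> u = w" using all by blast
      thus "P u e (medge Y u)" using pv that(1) by blast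
    qed
    hence wb: "weakly_blocks P Y e" unfolding weakly_blocks_def using e by blast
    have sb: "strongly_blocks P Y e" unfolding strongly_blocks_def using wb that(2) vw by blast
    have "e \<in> E1 \<or> e \<in> E2" using eE E12 by blast
    thus False using ns wb sb e by blast
  qed
  show ?thesis
  proof (intro conjI impI)
    show "P w (medge Y w) e"
    proof (rule ccontr)
      assume neg: "\<not> P w (medge Y w) e"
      hence "P w e (medge Y w)" using tot[OF wAB eD YD] by blast
      thus False using nb neg unfolding strict_pref_def by blast
    qed
    assume "strict_pref P v e (medge Y v)"
    thus "strict_pref P w (medge Y w) e"
      using nb tot[OF wAB eD YD] unfolding strict_pref_def by blast
  qed
qed

end


definition pt :: "'a set \<Rightarrow> 'a set \<Rightarrow> 'a" where "pt C e = (THE c. c \<in> C \<and> c \<in> e)"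

context ST begin

lemma pt_B: "e \<in> E \<Longrightarrow> pt B e \<in> B \<and> pt B e \<in> e"
  unfolding pt_def by (rule theI') (use E_hasB E_BB in blast)
lemma pt_A: "e \<in> E \<Longrightarrow> pt A e \<in> A \<and> pt A e \<in> e"
  unfolding pt_def by (rule theI') (use E_hasA E_AA in blast)

lemma half:
  assumes X: "X \<in> S" and Y: "Y \<in> S" and C: "(C = A \<and> C' = B) \<or> (C = B \<and> C' = A)"
    and c: "c \<in> C" and s: "strict_pref P c (medge X c) (medge Y c)"
  shows "pt C' (medge X c) \<in> C' \<and> medge X (pt C' (medge X c)) = medge X c \<and> c \<in> medge X c
     \<and> strict_pref P (pt C' (medge X c)) (medge Y (pt C' (medge X c))) (medge X (pt C' (medge X c)))"
proof -
  have mX: "is_matching E X" and mY: "is_matching E Y" using X Y S_m by auto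
  have cAB: "c \<in> A \<union> B" using c C by blast
  have ne: "medge X c \<noteq> {}" using strict_ne[OF cAB S_D[OF X] S_D[OF Y] s] .
  hence in1: "medge X c \<in> X" "c \<in> medge X c" using medge_ne[OF mX] by auto
  have eE: "medge X c \<in> E" using in1 m_sub[OF mX] by blast
  define w where "w = pt C' (medge X c)"
  have w: "w \<in> C'" "w \<in> medge X c" using pt_A[OF eE] pt_B[OF eE] C unfolding w_def by auto
  have cw: "c \<noteq> w" using w c C disj by auto
  have nY: "medge X c \<notin> Y"
  proof
    assume "medge X c \<in> Y"
    hence "medge Y c = medge X c" using medge_eq[OF mY] in1 by simp
    thus False using s unfolding strict_pref_def by simp
  qed
  have pv: "P c (medge X c) (medge Y c)" using s unfolding strict_pref_def by simp
  have g: "strict_pref P w (medge Y w) (medge X c)"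
    using G[OF X Y in1(1) nY in1(2) w(2) cw pv] s by blast
  have "medge X w = medge X c" using medge_eq[OF mX in1(1) w(2)] .
  thus ?thesis using g w in1 unfolding w_def by simp
qed

lemma counting:
  assumes X: "X \<in> S" and Y: "Y \<in> S"
  defines "SA \<equiv> {a\<in>A. strict_pref P a (medge X a) (medge Y a)}"
    and "TB \<equiv> {b\<in>B. strict_pref P b (medge Y b) (medge X b)}"
  shows "(\<lambda>a. pt B (medge X a)) ` SA = TB \<and> (\<lambda>b. pt A (medge Y b)) ` TB = SA"
proof -
  have mX: "is_matching E X" and mY: "is_matching E Y" using X Y S_m by auto
  let ?f = "\<lambda>a. pt B (medge X a)" and ?g = "\<lambda>b. pt A (medge Y b)"
  have f1: "?f ` SA \<subseteq> TB"
  proof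
    fix b assume "b \<in> ?f ` SA"
    then obtain a where a: "a \<in> SA" "b = ?f a" by blast
    from half[OF X Y, of A B a] a show "b \<in> TB" unfolding SA_def TB_def by auto
  qed
  have g1: "?g ` TB \<subseteq> SA"
  proof
    fix a assume "a \<in> ?g ` TB"
    then obtain b where b: "b \<in> TB" "a = ?g b" by blast
    from half[OF Y X, of B A b] b disj show "a \<in> SA" unfolding SA_def TB_def by auto
  qed
  have fi: "inj_on ?f SA"
  proof
    fix a a' assume a: "a \<in> SA" "a' \<in> SA" "?f a = ?f a'"
    have h1: "medge X (?f a) = medge X a" "a \<in> medge X a" using half[OF X Y, of A B a] a unfolding SA_def by auto
    have h2: "medge X (?f a') = medge X a'" "a' \<in> medge X a'" using half[OF X Y, of A B a'] a unfolding SA_def by auto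
    have "medge X a \<noteq> {}" using h1 by auto
    hence "medge X a \<in> E" using medge_ne[OF mX] m_sub[OF mX] by blast
    thus "a = a'" using h1 h2 a E_AA unfolding SA_def by (metis (no_types, lifting) mem_Collect_eq)
  qed
  have gi: "inj_on ?g TB"
  proof
    fix a a' assume a: "a \<in> TB" "a' \<in> TB" "?g a = ?g a'"
    have h1: "medge Y (?g a) = medge Y a" "a \<in> medge Y a" using half[OF Y X, of B A a] a disj unfolding TB_def by auto
    have h2: "medge Y (?g a') = medge Y a'" "a' \<in> medge Y a'" using half[OF Y X, of B A a'] a disj unfolding TB_def by auto
    have "medge Y a \<noteq> {}" using h1 by auto
    hence "medge Y a \<in> E" using medge_ne[OF mY] m_sub[OF mY] by blast
    thus "a = a'" using h1 h2 a E_BB unfolding TB_def by (metis (no_types, lifting) mem_Collect_eq)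
  qed
  have fS: "finite SA" "finite TB" using finA finB unfolding SA_def TB_def by auto
  have c1: "card SA \<le> card TB" using card_inj_on_le[OF fi f1 fS(2)] .
  have c2: "card TB \<le> card SA" using card_inj_on_le[OF gi g1 fS(1)] .
  have "?f ` SA = TB" using card_subset_eq[OF fS(2) f1] card_image[OF fi] c1 c2 by simp
  moreover have "?g ` TB = SA" using card_subset_eq[OF fS(1) g1] card_image[OF gi] c1 c2 by simp
  ultimately show ?thesis by blast
qed

end


context ST begin

lemma strict_trans: "v \<in> A \<union> B \<Longrightarrow> x \<in> D v \<Longrightarrow> y \<in> D v \<Longrightarrow> z \<in> D v \<Longrightarrow>
   strict_pref P v x y \<Longrightarrow> P v y z \<Longrightarrow> strict_pref P v x z"
  unfolding strict_pref_def using trans by blast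

lemma tot_strict: "v \<in> A \<union> B \<Longrightarrow> x \<in> D v \<Longrightarrow> y \<in> D v \<Longrightarrow> \<not> P v x y \<Longrightarrow> strict_pref P v y x"
  unfolding strict_pref_def using tot by blast

lemma meet_thm:
  assumes mu: "\<mu> \<in> S" and si: "\<sigma> \<in> S"
  defines "ch \<equiv> \<lambda>a. if P a (medge \<mu> a) (medge \<sigma> a) then medge \<mu> a else medge \<sigma> a"
  shows "meet A P \<mu> \<sigma> \<in> S \<and> (\<forall>a\<in>A. medge (meet A P \<mu> \<sigma>) a = ch a)
     \<and> (\<forall>b\<in>B. medge (meet A P \<mu> \<sigma>) b = (if P b (medge \<sigma> b) (medge \<mu> b) then medge \<mu> b else medge \<sigma> b))"
proof -
  define L where "L = meet A P \<mu> \<sigma>"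
  have Ld: "L = ch ` A - {{}}" unfolding L_def meet_def ch_def by simp
  have mm: "is_matching E \<mu>" and ms: "is_matching E \<sigma>" using mu si S_m by auto
  have chf: "(ch a = medge \<mu> a \<and> P a (medge \<mu> a) (medge \<sigma> a) \<and> ch a \<in> \<mu> \<and> a \<in> ch a)
           \<or> (ch a = medge \<sigma> a \<and> \<not> P a (medge \<mu> a) (medge \<sigma> a) \<and> ch a \<in> \<sigma> \<and> a \<in> ch a)"
    if "ch a \<noteq> {}" for a
    using that medge_ne[OF mm, of a] medge_ne[OF ms, of a] unfolding ch_def by (auto split: if_splits)
  have LE: "L \<subseteq> E"
  proof
    fix e assume "e \<in> L"
    then obtain a where "a \<in> A" "e = ch a" "e \<noteq> {}" unfolding Ld by blast
    thus "e \<in> E" using chf[of a] m_sub[OF mm] m_sub[OF ms] by blast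
  qed
  have mixed: "e = f"
    if "e \<in> \<mu>" "a \<in> e" "a \<in> A" "P a (medge \<mu> a) (medge \<sigma> a)" "f \<in> \<sigma>" "a' \<in> f" "a' \<in> A"
       "\<not> P a' (medge \<mu> a') (medge \<sigma> a')" "v \<in> e" "v \<in> f" "v \<in> B" for e f a a' v
  proof (cases "e \<in> \<sigma>")
    case True thus ?thesis using m_uniq[OF ms] that by blast
  next
    case False
    have ea: "medge \<mu> a = e" using medge_eq[OF mm] that by blast
    have ev: "medge \<mu> v = e" using medge_eq[OF mm] that by blast
    have fa: "medge \<sigma> a' = f" using medge_eq[OF ms] that by blast
    have fv: "medge \<sigma> v = f" using medge_eq[OF ms] that by blast
    have av: "a \<noteq> v" "a' \<noteq> v" using that disj by auto
    have 1: "P v f e" using G[OF mu si that(1) False that(2) that(9) av(1)] that(4) ea fv by simp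
    have a'AB: "a' \<in> A \<union> B" using that by blast
    have st: "strict_pref P a' f (medge \<mu> a')"
      using tot_strict[OF a'AB S_D[OF mu] S_D[OF si] that(8)] fa by simp
    have fnm: "f \<notin> \<mu>"
    proof
      assume "f \<in> \<mu>" hence "medge \<mu> a' = f" using medge_eq[OF mm] that by blast
      thus False using st unfolding strict_pref_def by simp
    qed
    have "strict_pref P v (medge \<mu> v) f"
      using G[OF si mu that(5) fnm that(6) that(10) av(2)] st unfolding strict_pref_def by blast
    thus ?thesis using 1 ev unfolding strict_pref_def by simp
  qed
  have mL: "is_matching E L"
  proof (rule m_intro[OF LE])
    fix e f v assume ef: "e \<in> L" "f \<in> L" "v \<in> e" "v \<in> f"
    then obtain a a' where aa: "a \<in> A" "e = ch a" "e \<noteq> {}" "a' \<in> A" "f = ch a'" "f \<noteq> {}" unfolding Ld by blast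
    show "e = f"
    proof (cases "a = a'")
      case True thus ?thesis using aa by simp
    next
      case False
      have eE: "e \<in> E" "f \<in> E" using ef LE by auto
      have ae: "a \<in> e" "a' \<in> f" using chf aa by blast+
      have vB: "v \<in> B"
      proof (rule ccontr)
        assume "v \<notin> B"
        hence "v \<in> A" using E_vert eE ef by blast
        hence "v = a" "v = a'" using E_AA eE ef ae aa by blast+
        thus False using False by simp
      qed
      have ca: "ch a \<noteq> {}" "ch a' \<noteq> {}" using aa by auto
      have A1: "(e \<in> \<mu> \<and> P a (medge \<mu> a) (medge \<sigma> a)) \<or> (e \<in> \<sigma> \<and> \<not> P a (medge \<mu> a) (medge \<sigma> a))"
        using chf[OF ca(1)] aa by auto
      have A2: "(f \<in> \<mu> \<and> P a' (medge \<mu> a') (medge \<sigma> a')) \<or> (f \<in> \<sigma> \<and> \<not> P a' (medge \<mu> a') (medge \<sigma> a'))"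
        using chf[OF ca(2)] aa by auto
      from A1 A2 show ?thesis
      proof (elim disjE conjE)
        assume "e \<in> \<mu>" "f \<in> \<mu>" thus ?thesis using m_uniq[OF mm] ef by blast
      next
        assume "e \<in> \<sigma>" "f \<in> \<sigma>" thus ?thesis using m_uniq[OF ms] ef by blast
      next
        assume "e \<in> \<mu>" "P a (medge \<mu> a) (medge \<sigma> a)" "f \<in> \<sigma>" "\<not> P a' (medge \<mu> a') (medge \<sigma> a')"
        thus ?thesis using mixed[of e a f a' v] ae aa ef vB by blast
      next
        assume "f \<in> \<mu>" "P a' (medge \<mu> a') (medge \<sigma> a')" "e \<in> \<sigma>" "\<not> P a (medge \<mu> a) (medge \<sigma> a)"
        thus ?thesis using mixed[of f a' e a v] ae aa ef vB by (metis (no_types))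
      qed
    qed
  qed
  have LA: "medge L a = ch a" if a: "a \<in> A" for a
  proof (cases "ch a = {}")
    case True
    have "\<forall>e\<in>L. a \<notin> e"
    proof (intro ballI notI)
      fix e assume e: "e \<in> L" "a \<in> e"
      then obtain a' where a': "a' \<in> A" "e = ch a'" "e \<noteq> {}" unfolding Ld by blast
      have "a' \<in> e" using chf a' by blast
      hence "a = a'" using E_AA LE e a a' by blast
      thus False using True a' by simp
    qed
    thus ?thesis using medge_empty[OF mL] True by simp
  next
    case False
    hence "ch a \<in> L" "a \<in> ch a" using a chf unfolding Ld by blast+
    thus ?thesis using medge_eq[OF mL] by blast
  qed
  have LB: "medge L b = (if P b (medge \<sigma> b) (medge \<mu> b) then medge \<mu> b else medge \<sigma> b)"
    if b: "b \<in> B" for b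
  proof (cases "P b (medge \<sigma> b) (medge \<mu> b)")
    case Pb: True
    show ?thesis
    proof (cases "medge \<mu> b = {}")
      case True
      have "\<forall>e\<in>L. b \<notin> e"
      proof (intro ballI notI)
        fix e assume e: "e \<in> L" "b \<in> e"
        then obtain a' where a': "a' \<in> A" "e = ch a'" "e \<noteq> {}" unfolding Ld by blast
        have "e \<in> \<mu> \<or> e \<in> \<sigma>" using chf a' by blast
        moreover have "e \<notin> \<mu>" using medge_eq[OF mm _ e(2)] True a' by auto
        ultimately have es: "medge \<sigma> b = e" using medge_eq[OF ms _ e(2)] by blast
        have "e \<in> inc_edges E b" using e LE unfolding inc_edges_def by blast
        hence "strict_pref P b (medge \<sigma> b) (medge \<mu> b)" using bot[of b e] b es True
          unfolding strict_pref_def by simp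
        hence "b \<in> {b\<in>B. strict_pref P b (medge \<sigma> b) (medge \<mu> b)}" using b by simp
        then obtain a where a: "a \<in> {a\<in>A. strict_pref P a (medge \<mu> a) (medge \<sigma> a)}" "pt B (medge \<mu> a) = b"
          using counting[OF mu si] by (metis (no_types, lifting) imageE)
        from half[OF mu si, of A B a] a have "medge \<mu> b = medge \<mu> a" "a \<in> medge \<mu> a" by auto
        thus False using True by simp
      qed
      thus ?thesis using medge_empty[OF mL] True Pb by simp
    next
      case False
      have mb: "medge \<mu> b \<in> \<mu>" "b \<in> medge \<mu> b" using medge_ne[OF mm False] by auto
      hence mbE: "medge \<mu> b \<in> E" using m_sub[OF mm] by blast
      define a1 where "a1 = pt A (medge \<mu> b)"
      have a1: "a1 \<in> A" "a1 \<in> medge \<mu> b" using pt_A[OF mbE] unfolding a1_def by auto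
      have ma1: "medge \<mu> a1 = medge \<mu> b" using medge_eq[OF mm mb(1) a1(2)] .
      have Pa1: "P a1 (medge \<mu> a1) (medge \<sigma> a1)"
      proof (rule ccontr)
        assume n: "\<not> ?thesis"
        have a1AB: "a1 \<in> A \<union> B" using a1 by blast
        have "strict_pref P a1 (medge \<sigma> a1) (medge \<mu> a1)"
          using tot_strict[OF a1AB S_D[OF mu] S_D[OF si] n] .
        hence "a1 \<in> {a\<in>A. strict_pref P a (medge \<sigma> a) (medge \<mu> a)}" using a1 by simp
        then obtain b' where b': "b' \<in> {b\<in>B. strict_pref P b (medge \<mu> b) (medge \<sigma> b)}"
          "pt A (medge \<mu> b') = a1"
          using counting[OF si mu] by (metis (no_types, lifting) imageE)
        from half[OF mu si, of B A b'] b' disj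
        have "medge \<mu> a1 = medge \<mu> b'" "b' \<in> medge \<mu> b'" by auto
        hence "b' = b" using E_BB[OF mbE] ma1 mb b b' by auto
        thus False using b' Pb unfolding strict_pref_def by simp
      qed
      hence "ch a1 = medge \<mu> b" unfolding ch_def using ma1 by simp
      hence "medge \<mu> b \<in> L" using a1 False unfolding Ld by blast
      thus ?thesis using medge_eq[OF mL _ mb(2)] Pb by simp
    qed
  next
    case Pb: False
    have bAB: "b \<in> A \<union> B" using b by blast
    have "strict_pref P b (medge \<mu> b) (medge \<sigma> b)"
      using tot_strict[OF bAB S_D[OF si] S_D[OF mu] Pb] .
    hence "b \<in> {b\<in>B. strict_pref P b (medge \<mu> b) (medge \<sigma> b)}" using b by simp
    then obtain a2 where a2: "a2 \<in> {a\<in>A. strict_pref P a (medge \<sigma> a) (medge \<mu> a)}" "pt B (medge \<sigma> a2) = b"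
      using counting[OF si mu] by (metis (no_types, lifting) imageE)
    from half[OF si mu, of A B a2] a2 have h: "medge \<sigma> b = medge \<sigma> a2" "a2 \<in> medge \<sigma> a2" by auto
    have "\<not> P a2 (medge \<mu> a2) (medge \<sigma> a2)" using a2 unfolding strict_pref_def by simp
    hence "ch a2 = medge \<sigma> b" unfolding ch_def using h by simp
    moreover have "medge \<sigma> b \<noteq> {}" using h by auto
    ultimately have "medge \<sigma> b \<in> L" using a2 unfolding Ld by blast
    moreover have "b \<in> medge \<sigma> b" using medge_ne[OF ms, of b] h by auto
    ultimately show ?thesis using medge_eq[OF mL] Pb by simp
  qed
  have block: "\<exists>Z\<in>{\<mu>, \<sigma>}. g \<notin> Z \<and> weakly_blocks P Z g \<and> (strongly_blocks P L g \<longrightarrow> strongly_blocks P Z g)"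
    if g: "g \<in> E" "g \<notin> L" "weakly_blocks P L g" for g
  proof -
    obtain a b where ab: "g = {a,b}" "a \<in> A" "b \<in> B" using E_form g by blast
    define Z where "Z = (if P b (medge \<sigma> b) (medge \<mu> b) then \<mu> else \<sigma>)"
    have Z: "Z \<in> S" "Z = \<mu> \<or> Z = \<sigma>" unfolding Z_def using mu si by auto
    have mZ: "is_matching E Z" using Z S_m by auto
    have Zb: "medge L b = medge Z b" using LB[OF ab(3)] unfolding Z_def by simp
    have aAB: "a \<in> A \<union> B" and bAB: "b \<in> A \<union> B" using ab by auto
    have Da: "ch a \<in> D a" "medge Z a \<in> D a" "g \<in> D a" "medge L a \<in> D a"
      using S_D[OF mu] S_D[OF si] S_D[OF Z(1)] g ab medge_D[OF mL] unfolding ch_def inc_edges_def by auto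
    have Db: "medge Z b \<in> D b" "g \<in> D b"
      using S_D[OF Z(1)] g ab unfolding inc_edges_def by auto
    have chZ: "P a (ch a) (medge Z a)"
      using Z(2) tot[OF aAB S_D[OF mu, of a] S_D[OF si, of a]] refl[OF aAB S_D[OF mu, of a]]
        refl[OF aAB S_D[OF si, of a]] unfolding ch_def by auto
    have LAa: "medge L a = ch a" using LA ab by simp
    have gZ: "g \<notin> Z"
    proof
      assume "g \<in> Z"
      hence "medge Z b = g" using medge_eq[OF mZ] ab by simp
      hence "medge L b = g" using Zb by simp
      hence "g \<in> L" using medge_ne[OF mL, of b] ab by auto
      thus False using g by simp
    qed
    have Pa: "P a g (ch a)" "P b g (medge Z b)" using g ab LAa Zb unfolding weakly_blocks_def by auto
    have Pa2: "P a g (medge Z a)" using trans[OF aAB Da(3) Da(1) Da(2) Pa(1) chZ] .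
    have wb: "weakly_blocks P Z g" unfolding weakly_blocks_def using gZ Pa Pa2 ab by auto
    have "strongly_blocks P Z g" if sb: "strongly_blocks P L g"
    proof -
      obtain w where w: "w \<in> g" "strict_pref P w g (medge L w)" using sb unfolding strongly_blocks_def by blast
      have "strict_pref P a g (medge Z a) \<or> strict_pref P b g (medge Z b)"
      proof (cases "w = a")
        case True
        hence "strict_pref P a g (ch a)" using w LAa by simp
        thus ?thesis using strict_trans[OF aAB Da(3) Da(1) Da(2) _ chZ] by blast
      next
        case False
        hence "w = b" using w ab by auto
        thus ?thesis using w Zb by simp
      qed
      thus ?thesis using wb ab unfolding strongly_blocks_def by auto
    qed
    thus ?thesis using Z gZ wb by blast
  qed
  have stab: "nu_stable E E1 E2 P L"
    unfolding nu_stable_def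
  proof (intro conjI ballI)
    show "is_matching E L" by fact
    have ns: "(\<forall>f \<in> E1 - Z. \<not> weakly_blocks P Z f) \<and> (\<forall>f \<in> E2 - Z. \<not> strongly_blocks P Z f)"
      if "Z \<in> {\<mu>,\<sigma>}" for Z using that mu si unfolding NUS_def nu_stable_def by auto
    fix g
    { assume g: "g \<in> E1 - L"
      show "\<not> weakly_blocks P L g"
      proof
        assume wb: "weakly_blocks P L g"
        have gE: "g \<in> E" using g E12 by blast
        obtain Z where Z: "Z \<in> {\<mu>,\<sigma>}" "g \<notin> Z" "weakly_blocks P Z g"
          using block[OF gE _ wb] g by blast
        show False using ns[OF Z(1)] Z g by blast
      qed }
    { assume g: "g \<in> E2 - L"
      show "\<not> strongly_blocks P L g"
      proof
        assume sb: "strongly_blocks P L g"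
        hence wb: "weakly_blocks P L g" unfolding strongly_blocks_def by blast
        have gE: "g \<in> E" using g E12 by blast
        obtain Z where Z: "Z \<in> {\<mu>,\<sigma>}" "g \<notin> Z" "strongly_blocks P Z g"
          using block[OF gE _ wb] g sb by blast
        show False using ns[OF Z(1)] Z g by blast
      qed }
  qed
  show ?thesis using stab LA LB unfolding L_def NUS_def by simp
qed

end


context ST begin

lemma rep_set: assumes m: "is_matching E L" shows "L = (\<lambda>a. medge L a) ` A - {{}}"
proof
  show "L \<subseteq> (\<lambda>a. medge L a) ` A - {{}}"
  proof
    fix e assume e: "e \<in> L"
    hence eE: "e \<in> E" using m_sub[OF m] by blast
    then obtain a where "a \<in> A" "a \<in> e" using E_hasA by blast
    moreover hence "medge L a = e" using medge_eq[OF m e] by simp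
    ultimately show "e \<in> (\<lambda>a. medge L a) ` A - {{}}" using E_ne[OF eE] by force
  qed
  show "(\<lambda>a. medge L a) ` A - {{}} \<subseteq> L" using medge_ne[OF m] by blast
qed

definition rk :: "'a \<Rightarrow> 'a set \<Rightarrow> nat" where "rk v x = card {y \<in> D v. P v x y}"

lemma rk: assumes v: "v \<in> A \<union> B" and x: "x \<in> D v" and y: "y \<in> D v"
  shows "P v x y \<longleftrightarrow> rk v y \<le> rk v x"
proof
  assume p: "P v x y"
  have "{z \<in> D v. P v y z} \<subseteq> {z \<in> D v. P v x z}" using trans[OF v x y] p by blast
  moreover have "finite {z \<in> D v. P v x z}" using D_fin by auto
  ultimately show "rk v y \<le> rk v x" unfolding rk_def by (rule card_mono[rotated])
next
  assume le: "rk v y \<le> rk v x"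
  show "P v x y"
  proof (rule ccontr)
    assume n: "\<not> P v x y"
    hence pyx: "P v y x" using tot[OF v x y] by blast
    have sub: "{z \<in> D v. P v x z} \<subseteq> {z \<in> D v. P v y z}" using trans[OF v y x] pyx by blast
    have "y \<in> {z \<in> D v. P v y z}" "y \<notin> {z \<in> D v. P v x z}" using refl[OF v y] y n by auto
    hence "{z \<in> D v. P v x z} \<subset> {z \<in> D v. P v y z}" using sub by blast
    moreover have "finite {z \<in> D v. P v y z}" using D_fin by auto
    ultimately have "rk v x < rk v y" unfolding rk_def by (rule psubset_card_mono[rotated])
    thus False using le by simp
  qed
qed

definition K :: "'a set set \<Rightarrow> 'a \<Rightarrow> nat" where "K \<mu> a = rk a (medge \<mu> a)"

lemma K_P: "\<mu> \<in> S \<Longrightarrow> \<sigma> \<in> S \<Longrightarrow> a \<in> A \<Longrightarrow> P a (medge \<mu> a) (medge \<sigma> a) \<longleftrightarrow> K \<sigma> a \<le> K \<mu> a"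
proof -
  assume a: "\<mu> \<in> S" "\<sigma> \<in> S" "a \<in> A"
  hence "a \<in> A \<union> B" by blast
  from rk[OF this S_D[OF a(1)] S_D[OF a(2)]] show ?thesis unfolding K_def .
qed

lemma meetK: assumes "\<mu> \<in> S" "\<sigma> \<in> S" "a \<in> A"
  shows "K (meet A P \<mu> \<sigma>) a = max (K \<mu> a) (K \<sigma> a)"
proof -
  have "medge (meet A P \<mu> \<sigma>) a = (if P a (medge \<mu> a) (medge \<sigma> a) then medge \<mu> a else medge \<sigma> a)"
    using meet_thm[OF assms(1,2)] assms(3) by blast
  thus ?thesis using K_P[OF assms] by (simp add: K_def max_def)
qed

lemma meetS: "\<mu> \<in> S \<Longrightarrow> \<sigma> \<in> S \<Longrightarrow> meet A P \<mu> \<sigma> \<in> S"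
  using meet_thm by blast

lemma Rchar: "(\<mu>, \<sigma>) \<in> equivR A E E1 E2 P \<longleftrightarrow> \<mu> \<in> S \<and> \<sigma> \<in> S \<and> (\<forall>a\<in>A. K \<mu> a = K \<sigma> a)"
proof -
  have "indiff P a (medge \<mu> a) (medge \<sigma> a) \<longleftrightarrow> K \<mu> a = K \<sigma> a" if "\<mu> \<in> S" "\<sigma> \<in> S" "a \<in> A" for a
    using K_P[OF that] K_P[OF that(2,1,3)] unfolding indiff_def by auto
  thus ?thesis unfolding equivR_def by auto
qed

lemma Requiv: "equiv S (equivR A E E1 E2 P)"
proof (rule equivI)
  show "equivR A E E1 E2 P \<subseteq> S \<times> S" using Rchar by auto
  show "refl_on S (equivR A E E1 E2 P)" by (rule refl_onI) (use Rchar in auto)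
  show "sym (equivR A E E1 E2 P)" by (rule symI) (use Rchar in auto)
  show "trans (equivR A E E1 E2 P)" by (rule transI) (use Rchar in auto)
qed

end

lemma join_thm:
  assumes st: "setting V1 V2 E E1 E2 P" and mu: "\<mu> \<in> NUS E E1 E2 P" and si: "\<sigma> \<in> NUS E E1 E2 P"
  shows "join V1 P \<mu> \<sigma> \<in> NUS E E1 E2 P \<and> (\<forall>a\<in>V1. medge (join V1 P \<mu> \<sigma>) a =
      (if P a (medge \<sigma> a) (medge \<mu> a) then medge \<mu> a else medge \<sigma> a))"
proof -
  interpret S1: ST V1 V2 E E1 E2 P using st by unfold_locales
  interpret S2: ST V2 V1 E E1 E2 P using setting_swap[OF st] by unfold_locales
  let ?M = "meet V2 P \<mu> \<sigma>"
  have M: "?M \<in> NUS E E1 E2 P" "\<forall>a\<in>V1. medge ?M a = (if P a (medge \<sigma> a) (medge \<mu> a) then medge \<mu> a else medge \<sigma> a)"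
    using S2.meet_thm[OF mu si] by blast+
  have "join V1 P \<mu> \<sigma> = (\<lambda>a. medge ?M a) ` V1 - {{}}"
  proof -
    have "(\<lambda>a. if P a (medge \<sigma> a) (medge \<mu> a) then medge \<mu> a else medge \<sigma> a) ` V1 = (\<lambda>a. medge ?M a) ` V1"
      by (rule image_cong) (use M(2) in auto)
    thus ?thesis unfolding join_def by simp
  qed
  also have "\<dots> = ?M" using S1.rep_set[OF S1.S_m[OF M(1)]] by simp
  finally show ?thesis using M by simp
qed

context ST begin

lemma joinS: "\<mu> \<in> S \<Longrightarrow> \<sigma> \<in> S \<Longrightarrow> join A P \<mu> \<sigma> \<in> S"
  using join_thm[OF st] by blast

lemma joinK: assumes "\<mu> \<in> S" "\<sigma> \<in> S" "a \<in> A"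
  shows "K (join A P \<mu> \<sigma>) a = min (K \<mu> a) (K \<sigma> a)"
proof -
  have "medge (join A P \<mu> \<sigma>) a = (if P a (medge \<sigma> a) (medge \<mu> a) then medge \<mu> a else medge \<sigma> a)"
    using join_thm[OF st assms(1,2)] assms(3) by blast
  thus ?thesis using K_P[OF assms(2,1,3)] by (simp add: K_def min_def)
qed

end


context ST begin

abbreviation "R \<equiv> equivR A E E1 E2 P"
abbreviation "cl \<mu> \<equiv> R `` {\<mu>}"

lemma cl_eq: "\<mu> \<in> S \<Longrightarrow> \<sigma> \<in> S \<Longrightarrow> cl \<mu> = cl \<sigma> \<longleftrightarrow> (\<forall>a\<in>A. K \<mu> a = K \<sigma> a)"
  using eq_equiv_class_iff[OF Requiv] Rchar by blast

lemma cl_self: "\<mu> \<in> S \<Longrightarrow> \<mu> \<in> cl \<mu>"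
  using equiv_class_self[OF Requiv] .

lemma cl_C: "\<mu> \<in> S \<Longrightarrow> cl \<mu> \<in> S // R"
  by (rule quotientI)

lemma C_cl: assumes "X \<in> S // R" obtains \<mu> where "\<mu> \<in> S" "X = cl \<mu>"
  using assms by (rule quotientE) blast

lemma mem_cl: "\<mu> \<in> S \<Longrightarrow> x \<in> cl \<mu> \<Longrightarrow> x \<in> S \<and> cl x = cl \<mu>"
  using equiv_class_eq_iff[OF Requiv] by blast

lemma some_cl: "\<mu> \<in> S \<Longrightarrow> (SOME x. x \<in> cl \<mu>) \<in> S \<and> cl (SOME x. x \<in> cl \<mu>) = cl \<mu>"
  using mem_cl someI[of "\<lambda>x. x \<in> cl \<mu>", OF cl_self] by blast

lemma mC_cl: assumes "\<mu> \<in> S" "\<sigma> \<in> S"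
  shows "meetC A E E1 E2 P (cl \<mu>) (cl \<sigma>) = cl (meet A P \<mu> \<sigma>)"
proof -
  define x where "x = (SOME x. x \<in> cl \<mu>)"
  define y where "y = (SOME x. x \<in> cl \<sigma>)"
  have x: "x \<in> S" "\<forall>a\<in>A. K x a = K \<mu> a" using some_cl[OF assms(1)] cl_eq[OF _ assms(1)] unfolding x_def by blast+
  have y: "y \<in> S" "\<forall>a\<in>A. K y a = K \<sigma> a" using some_cl[OF assms(2)] cl_eq[OF _ assms(2)] unfolding y_def by blast+
  have "cl (meet A P x y) = cl (meet A P \<mu> \<sigma>)"
    using x y assms by (simp add: cl_eq meetS meetK)
  thus ?thesis unfolding meetC_def x_def y_def .
qed

lemma jC_cl: assumes "\<mu> \<in> S" "\<sigma> \<in> S"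
  shows "joinC A E E1 E2 P (cl \<mu>) (cl \<sigma>) = cl (join A P \<mu> \<sigma>)"
proof -
  define x where "x = (SOME x. x \<in> cl \<mu>)"
  define y where "y = (SOME x. x \<in> cl \<sigma>)"
  have x: "x \<in> S" "\<forall>a\<in>A. K x a = K \<mu> a" using some_cl[OF assms(1)] cl_eq[OF _ assms(1)] unfolding x_def by blast+
  have y: "y \<in> S" "\<forall>a\<in>A. K y a = K \<sigma> a" using some_cl[OF assms(2)] cl_eq[OF _ assms(2)] unfolding y_def by blast+
  have "cl (join A P x y) = cl (join A P \<mu> \<sigma>)"
    using x y assms by (simp add: cl_eq joinS joinK)
  thus ?thesis unfolding joinC_def x_def y_def .
qed

end

theorem theorem5p5:
  fixes V1 V2 :: "'a set" and E E1 E2 :: "'a set set"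
    and P :: "'a \<Rightarrow> 'a set \<Rightarrow> 'a set \<Rightarrow> bool"
  assumes "setting V1 V2 E E1 E2 P"
  defines "S \<equiv> NUS E E1 E2 P"
    and "R \<equiv> equivR V1 E E1 E2 P"
    and "C \<equiv> classes V1 E E1 E2 P"
    and "mC \<equiv> meetC V1 E E1 E2 P"
    and "jC \<equiv> joinC V1 E E1 E2 P"
  shows
    \<comment> \<open>well-definedness: the class operations agree with any choice of representatives\<close>
    "(\<forall>X \<in> C. \<forall>Y \<in> C. \<forall>\<mu> \<in> X. \<forall>\<sigma> \<in> Y.
        meet V1 P \<mu> \<sigma> \<in> S \<and> join V1 P \<mu> \<sigma> \<in> S \<and>
        mC X Y = R `` {meet V1 P \<mu> \<sigma>} \<and> jC X Y = R `` {join V1 P \<mu> \<sigma>})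
     \<and> (\<forall>X \<in> C. \<forall>Y \<in> C. mC X Y \<in> C \<and> jC X Y \<in> C)
     \<comment> \<open>idempotence\<close>
     \<and> (\<forall>X \<in> C. mC X X = X \<and> jC X X = X)
     \<comment> \<open>commutativity\<close>
     \<and> (\<forall>X \<in> C. \<forall>Y \<in> C. mC X Y = mC Y X \<and> jC X Y = jC Y X)
     \<comment> \<open>associativity\<close>
     \<and> (\<forall>X \<in> C. \<forall>Y \<in> C. \<forall>Z \<in> C.
          mC (mC X Y) Z = mC X (mC Y Z) \<and> jC (jC X Y) Z = jC X (jC Y Z))
     \<comment> \<open>absorption\<close>
     \<and> (\<forall>X \<in> C. \<forall>Y \<in> C. mC X (jC X Y) = X \<and> jC X (mC X Y) = X)
     \<comment> \<open>distributivity\<close>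
     \<and> (\<forall>X \<in> C. \<forall>Y \<in> C. \<forall>Z \<in> C.
          mC X (jC Y Z) = jC (mC X Y) (mC X Z) \<and> jC X (mC Y Z) = mC (jC X Y) (jC X Z))"
proof -
  interpret ST V1 V2 E E1 E2 P using assms(1) by unfold_locales
  have Cd: "C = S // R" unfolding C_def S_def R_def classes_def by simp
  note defs = S_def R_def mC_def jC_def
  have mc: "mC (R``{\<mu>}) (R``{\<sigma>}) = R``{meet V1 P \<mu> \<sigma>}" if "\<mu> \<in> S" "\<sigma> \<in> S" for \<mu> \<sigma>
    using mC_cl that unfolding defs by blast
  have jc: "jC (R``{\<mu>}) (R``{\<sigma>}) = R``{join V1 P \<mu> \<sigma>}" if "\<mu> \<in> S" "\<sigma> \<in> S" for \<mu> \<sigma>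
    using jC_cl that unfolding defs by blast
  have ceq: "R``{\<mu>} = R``{\<sigma>} \<longleftrightarrow> (\<forall>a\<in>V1. K \<mu> a = K \<sigma> a)" if "\<mu> \<in> S" "\<sigma> \<in> S" for \<mu> \<sigma>
    using cl_eq that unfolding defs by blast
  have mS: "meet V1 P \<mu> \<sigma> \<in> S" and jS: "join V1 P \<mu> \<sigma> \<in> S" if "\<mu> \<in> S" "\<sigma> \<in> S" for \<mu> \<sigma>
    using meetS joinS that unfolding defs by blast+
  have mK: "K (meet V1 P \<mu> \<sigma>) a = max (K \<mu> a) (K \<sigma> a)" and jK: "K (join V1 P \<mu> \<sigma>) a = min (K \<mu> a) (K \<sigma> a)"
    if "\<mu> \<in> S" "\<sigma> \<in> S" "a \<in> V1" for \<mu> \<sigma> a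
    using meetK joinK that unfolding defs by blast+
  have inC: "R``{\<mu>} \<in> C" if "\<mu> \<in> S" for \<mu> using cl_C that unfolding Cd defs by blast
  have getC: "\<exists>\<mu>\<in>S. X = R``{\<mu>}" if "X \<in> C" for X using C_cl that unfolding Cd defs by metis
  have memC: "x \<in> S \<and> R``{x} = R``{\<mu>}" if "\<mu> \<in> S" "x \<in> R``{\<mu>}" for x \<mu>
    using mem_cl that unfolding defs by blast
  note simps = mc jc ceq mS jS mK jK
  show ?thesis
  proof (intro conjI ballI)
    fix X Y \<mu> \<sigma> assume X: "X \<in> C" and Y: "Y \<in> C" and m: "\<mu> \<in> X" and s: "\<sigma> \<in> Y"
    obtain x y where xy: "x \<in> S" "y \<in> S" "X = R``{x}" "Y = R``{y}" using getC X Y by metis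
    have ms: "\<mu> \<in> S" "\<sigma> \<in> S" "X = R``{\<mu>}" "Y = R``{\<sigma>}" using memC xy m s by metis+
    show "meet V1 P \<mu> \<sigma> \<in> S" "join V1 P \<mu> \<sigma> \<in> S" using ms mS jS by auto
    show "mC X Y = R `` {meet V1 P \<mu> \<sigma>}" "jC X Y = R `` {join V1 P \<mu> \<sigma>}" using ms mc jc by auto
  next
    fix X Y assume X: "X \<in> C" and Y: "Y \<in> C"
    obtain x y where xy: "x \<in> S" "y \<in> S" "X = R``{x}" "Y = R``{y}" using getC X Y by metis
    show "mC X Y \<in> C" "jC X Y \<in> C" using xy inC mc jc mS jS by auto
    show "mC X Y = mC Y X" "jC X Y = jC Y X" using xy by (simp_all add: simps max.commute min.commute)
    show "mC X (jC X Y) = X" "jC X (mC X Y) = X" using xy by (simp_all add: simps)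
  next
    fix X assume X: "X \<in> C"
    obtain x where xy: "x \<in> S" "X = R``{x}" using getC X by metis
    show "mC X X = X" "jC X X = X" using xy by (simp_all add: simps)
  next
    fix X Y Z assume X: "X \<in> C" and Y: "Y \<in> C" and Z: "Z \<in> C"
    obtain x y z where xy: "x \<in> S" "y \<in> S" "z \<in> S" "X = R``{x}" "Y = R``{y}" "Z = R``{z}"
      using getC X Y Z by metis
    show "mC (mC X Y) Z = mC X (mC Y Z)" "jC (jC X Y) Z = jC X (jC Y Z)"
      using xy by (simp_all add: simps max.assoc min.assoc)
    show "mC X (jC Y Z) = jC (mC X Y) (mC X Z)"
      using xy by (simp add: simps max_min_distrib2)
    show "jC X (mC Y Z) = mC (jC X Y) (jC X Z)"
      using xy by (simp add: simps min_max_distrib2)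
  qed
qed


end
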